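(* Let $l<u$ be real, $D=[l,u]$, $b>0$, and for $p\in D$ let $C_p = 1-\frac{1}{2}\left(e^{-\frac{p-l}{b}}+e^{-\frac{u-p}{b}}\right)$. Let $z\ge 0$. Then for all $q$ with $q\in D$ and $q+z\in D$ (and $q$ in the interior of the set of such points, so that the derivative is taken there), $$\frac{\partial}{\partial q}\left(\frac{C_{q+z}}{C_q}e^{\frac{z}{b}}\right)\le 0.$$
   Context: $C_p$ equals $\int_l^u \frac{1}{2b}e^{-|x-p|/b}\,dx$ for $p\in D$. *)

theory Defs
  imports "HOL-Analysis.Analysis"
begin

text \<open>Normalising constant C_p of the Laplace mechanism truncated to D = [l,u] with scale b.\<close>
definition Cnorm :: "real \<Rightarrow> real \<Rightarrow> real \<Rightarrow> real \<Rightarrow> real" where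
  "Cnorm l u b p = 1 - (exp (- (p - l) / b) + exp (- (u - p) / b)) / 2"

end

theory Submission
  imports Defs
begin

lemma Cder: assumes "b > 0"
  shows "(Cnorm l u b has_real_derivative (exp(-(p-l)/b) - exp(-(u-p)/b))/(2*b)) (at p)"
  unfolding Cnorm_def[abs_def]
  using assms by (auto intro!: derivative_eq_intros simp: field_simps)

theorem lemmaA2:
  fixes l u b z q :: real
  assumes "l < u" and "b > 0" and "z \<ge> 0"
    and "q \<in> interior {x. x \<in> {l..u} \<and> x + z \<in> {l..u}}"
  shows "deriv (\<lambda>x. Cnorm l u b (x + z) / Cnorm l u b x * exp (z / b)) q \<le> 0"
proof -
  have qin: "q \<in> {x. x \<in> {l..u} \<and> x + z \<in> {l..u}}" using assms(4) interior_subset by blast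
  hence q1: "l \<le> q" "q + z \<le> u" "q \<le> u" by auto
  define A where "A = exp(-(q-l)/b)"
  define B where "B = exp(-(u-q)/b)"
  define E where "E = exp(z/b)"
  have A1: "A \<le> 1" "A > 0" unfolding A_def using q1 assms(2) by (auto simp: divide_nonpos_pos)
  have B1: "B \<le> 1" "B > 0" unfolding B_def using q1 assms(2) by (auto simp: divide_nonpos_pos)
  have E1: "E \<ge> 1" unfolding E_def using assms by simp
  have BE1: "B * E \<le> 1"
  proof -
    have "B * E = exp(-(u-(q+z))/b)" unfolding B_def E_def
      by (simp add: exp_add[symmetric] diff_divide_distrib add_divide_distrib)
    thus ?thesis using q1 assms(2) by (simp add: divide_nonpos_pos)
  qed
  have AE: "exp(-(q+z-l)/b) = A / E" unfolding A_def E_def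
    by (simp add: exp_diff[symmetric] diff_divide_distrib add_divide_distrib)
  have BE: "exp(-(u-(q+z))/b) = B * E" unfolding B_def E_def
      by (simp add: exp_add[symmetric] diff_divide_distrib add_divide_distrib)
  have AB2: "A + B < 2"
  proof -
    have "\<not> (A = 1 \<and> B = 1)"
    proof
      assume "A = 1 \<and> B = 1"
      hence "q = l" "u = q" unfolding A_def B_def using assms(2) by auto
      thus False using assms(1) by simp
    qed
    thus ?thesis using A1 B1 by linarith
  qed
  have Cq: "Cnorm l u b q = 1 - (A + B)/2" unfolding Cnorm_def A_def B_def by simp
  have Cqz: "Cnorm l u b (q+z) = 1 - (A/E + B*E)/2" unfolding Cnorm_def AE[symmetric] BE[symmetric] by simp
  have Cpos: "Cnorm l u b q \<noteq> 0" using Cq AB2 by simp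
  have D: "((\<lambda>x. Cnorm l u b (x + z) / Cnorm l u b x * exp (z / b)) has_real_derivative
     (((A/E - B*E)/(2*b)) * Cnorm l u b q - Cnorm l u b (q+z) * ((A - B)/(2*b))) / (Cnorm l u b q * Cnorm l u b q) * E) (at q)"
  proof -
    have d1: "((\<lambda>x. Cnorm l u b (x + z)) has_real_derivative (A/E - B*E)/(2*b)) (at q)"
    proof -
      have h: "((\<lambda>x. x+z) has_real_derivative 1) (at q)" by (auto intro!: derivative_eq_intros)
      have c: "(Cnorm l u b has_real_derivative (A/E - B*E)/(2*b)) (at ((\<lambda>x. x+z) q))"
        using Cder[OF assms(2), of l u "q+z"] by (simp only: AE BE)
      show ?thesis using DERIV_chain2[OF c h] by simp
    qed
    have d2: "(Cnorm l u b has_real_derivative (A - B)/(2*b)) (at q)"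
      using Cder[OF assms(2)] unfolding A_def B_def by simp
    show ?thesis
      using DERIV_mult[OF DERIV_divide[OF d1 d2 Cpos] DERIV_const[of "exp (z/b)"]]
      unfolding E_def by simp
  qed
  have key: "((A/E - B*E)/(2*b)) * Cnorm l u b q - Cnorm l u b (q+z) * ((A - B)/(2*b)) \<le> 0"
  proof -
    have "E * (2*b) * (((A/E - B*E)/(2*b)) * Cnorm l u b q - Cnorm l u b (q+z) * ((A - B)/(2*b)))
       = - (E - 1) * (A*(1-B) + B*E*(1-A))"
      unfolding Cq Cqz using E1 assms(2) by (simp add: field_simps)
    moreover have "(E - 1) * (A*(1-B) + B*E*(1-A)) \<ge> 0"
      using E1 A1 B1 by (intro mult_nonneg_nonneg add_nonneg_nonneg) auto
    moreover have "E * (2*b) > 0" using E1 assms(2) by simp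
    ultimately have "E * (2*b) * (((A/E - B*E)/(2*b)) * Cnorm l u b q - Cnorm l u b (q+z) * ((A - B)/(2*b))) \<le> 0"
      and "E * (2*b) > 0" by linarith+
    moreover have gen: "\<And>x y::real. x>0 \<Longrightarrow> x*y \<le> 0 \<Longrightarrow> y \<le> 0"
      by (meson mult_pos_pos not_le)
    ultimately show ?thesis by blast
  qed
  have "deriv (\<lambda>x. Cnorm l u b (x + z) / Cnorm l u b x * exp (z / b)) q =
     (((A/E - B*E)/(2*b)) * Cnorm l u b q - Cnorm l u b (q+z) * ((A - B)/(2*b))) / (Cnorm l u b q * Cnorm l u b q) * E"
    using DERIV_imp_deriv[OF D] .
  also have "\<dots> \<le> 0" using key E1
    by (intro mult_nonpos_nonneg divide_nonpos_nonneg) auto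
  finally show ?thesis .
qed

end
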